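(* Let $N,M,r$ be positive integers and let $\xi^{1},\dots,\xi^{M}\in\{-1,+1\}^{N}$ be memory-vectors such that the Hamming distance between any two distinct memory-vectors is at least $\tau N$ for some $\tau>0$. Let $0<\rho<\frac{\tau}{2}$ and suppose $M\le \exp(2N(\tau-2\rho))\frac{1-e^{-2}}{2e^{2}}$. Let $E_{\mathrm{rand}}$ be the compact associative memory energy defined in the context, with FAVOR++ parameter $s\in(0,1)$ and constants $\widehat A,B,D$ as defined there. Fix $l\in\{1,\dots,M\}$, an input $\widehat{\xi}^{l}\in\{-1,+1\}^N$ at Hamming distance at most $\rho N$ from $\xi^l$, and a coordinate $i$; let $\tilde{\xi}^{l}$ be $\widehat{\xi}^{l}$ with its $i$-th coordinate negated and $\Delta(E_{\mathrm{rand}})=E_{\mathrm{rand}}(\tilde{\xi}^{l};\xi^1,\dots,\xi^M)-E_{\mathrm{rand}}(\widehat{\xi}^{l};\xi^1,\dots,\xi^M)$. Then (i) if $\widehat{\xi}^{l}_i=\xi^{l}_i$ then $\mathbb E[\Delta(E_{\mathrm{rand}})]>0$, and if $\widehat{\xi}^{l}_i=-\xi^{l}_i$ then $\mathbb E[\Delta(E_{\mathrm{rand}})]<0$; and (ii) $$\mathrm{Var}(\Delta(E_{\mathrm{rand}}))=\frac1r\big(V_1+V_2-2V_3-V_4-V_5+2V_6\big),$$ where, with all sums over $\mu_1,\mu_2\in\{1,\dots,M\}$, $V_1=\sum\Psi(\xi^{\mu_1}+\xi^{\mu_2}+2\widehat\xi^l)$, $V_2=\sum\Psi(\xi^{\mu_1}+\xi^{\mu_2}+2\tilde\xi^l)$,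 $V_3=\sum\Psi(\xi^{\mu_1}+\xi^{\mu_2}+\widehat\xi^l+\tilde\xi^l)$, $V_4=\sum\exp((\xi^{\mu_1})^\top\widehat\xi^l)\exp((\xi^{\mu_2})^\top\widehat\xi^l)$, $V_5=\sum\exp((\xi^{\mu_1})^\top\tilde\xi^l)\exp((\xi^{\mu_2})^\top\tilde\xi^l)$, $V_6=\sum\exp((\xi^{\mu_1})^\top\widehat\xi^l)\exp((\xi^{\mu_2})^\top\tilde\xi^l)$, and $$\Psi(\mathbf x)=D^{4}\exp(-2N)(1+8\widehat A)^{-N/2}\exp\Big(\frac{B^{2}}{2(1+8\widehat A)}\|\mathbf x\|^{2}\Big).$$
   Context: FAVOR++ random features: fix a parameter $s\in(0,1)$ and set $A=1-\frac{1}{s}$, $\widehat A=-A>0$, $B=\sqrt{1+4\widehat A}$, $C=-\frac12$, $D=(1+4\widehat A)^{N/4}$. For i.i.d. $\omega_1,\dots,\omega_r\sim\mathcal N(0,\mathbf I_N)$ define $\phi_{F++}:\mathbb R^N\to\mathbb R^r$ by $$\phi_{F++}(\mathbf z)=\frac{D}{\sqrt r}\Big(\exp\big(-\widehat A\|\omega_k\|_2^2+B\,\omega_k^\top\mathbf z+C\|\mathbf z\|_2^2\big)\Big)_{k=1}^{r}.$$ The compact associative memory energy of an input $\xi\in\{-1,+1\}^N$ given memories $\xi^1,\dots,\xi^M$ is $$E_{\mathrm{rand}}(\xi;\xi^1,\dots,\xi^M)=\phi_{F++}(\xi)^\top\mathbf M,\qquad \mathbf M=-\sum_{\mu=1}^{M}\phi_{F++}(\xi^{\mu}),$$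 with the same random vectors $\omega_k$ used throughout; expectations and variances are over $\omega_1,\dots,\omega_r$. *)

theory Defs
  imports "HOL-Probability.Probability"
begin

text \<open>Vectors in R^N are represented as functions nat => real; only the
coordinates j < N are relevant.\<close>

definition dotN :: "nat \<Rightarrow> (nat \<Rightarrow> real) \<Rightarrow> (nat \<Rightarrow> real) \<Rightarrow> real" where
  "dotN N x y = (\<Sum>j<N. x j * y j)"

definition sqnormN :: "nat \<Rightarrow> (nat \<Rightarrow> real) \<Rightarrow> real" where
  "sqnormN N x = (\<Sum>j<N. (x j)\<^sup>2)"

definition pm1_vec :: "nat \<Rightarrow> (nat \<Rightarrow> real) \<Rightarrow> bool" where
  "pm1_vec N x \<longleftrightarrow> (\<forall>j<N. x j = 1 \<or> x j = -1)"

definition hamming :: "nat \<Rightarrow> (nat \<Rightarrow> real) \<Rightarrow> (nat \<Rightarrow> real) \<Rightarrow> nat" where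
  "hamming N x y = card {j. j < N \<and> x j \<noteq> y j}"

definition flip_coord :: "nat \<Rightarrow> (nat \<Rightarrow> real) \<Rightarrow> (nat \<Rightarrow> real)" where
  "flip_coord i x = (\<lambda>j. if j = i then - x j else x j)"

definition Ahat :: "real \<Rightarrow> real" where "Ahat s = -(1 - 1 / s)"
definition Bc :: "real \<Rightarrow> real" where "Bc s = sqrt (1 + 4 * Ahat s)"
definition Cc :: real where "Cc = -1/2"
definition Dc :: "real \<Rightarrow> nat \<Rightarrow> real" where "Dc s N = (1 + 4 * Ahat s) powr (real N / 4)"

text \<open>Sample space: omega (k, j) is the j-th coordinate of the k-th random vector
omega_k, for k < r and j < N; all coordinates i.i.d. standard normal.\<close>
definition gauss_space :: "nat \<Rightarrow> nat \<Rightarrow> (nat \<times> nat \<Rightarrow> real) measure" where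
  "gauss_space N r = PiM ({..<r} \<times> {..<N}) (\<lambda>_. std_normal_distribution)"

definition omega_vec :: "(nat \<times> nat \<Rightarrow> real) \<Rightarrow> nat \<Rightarrow> (nat \<Rightarrow> real)" where
  "omega_vec \<omega> k = (\<lambda>j. \<omega> (k, j))"

definition phi_fpp :: "real \<Rightarrow> nat \<Rightarrow> nat \<Rightarrow> (nat \<times> nat \<Rightarrow> real) \<Rightarrow> (nat \<Rightarrow> real) \<Rightarrow> nat \<Rightarrow> real" where
  "phi_fpp s N r \<omega> z k = Dc s N / sqrt (real r) *
     exp (- Ahat s * sqnormN N (omega_vec \<omega> k) + Bc s * dotN N (omega_vec \<omega> k) z + Cc * sqnormN N z)"

definition E_rand :: "real \<Rightarrow> nat \<Rightarrow> nat \<Rightarrow> (nat \<times> nat \<Rightarrow> real) \<Rightarrow> nat \<Rightarrow> (nat \<Rightarrow> nat \<Rightarrow> real)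
    \<Rightarrow> (nat \<Rightarrow> real) \<Rightarrow> real" where
  "E_rand s N r \<omega> M mem x =
     (\<Sum>k<r. phi_fpp s N r \<omega> x k * (- (\<Sum>\<mu>\<in>{1..M}. phi_fpp s N r \<omega> (mem \<mu>) k)))"

definition expect :: "'a measure \<Rightarrow> ('a \<Rightarrow> real) \<Rightarrow> real" where
  "expect W X = integral\<^sup>L W X"

definition var :: "'a measure \<Rightarrow> ('a \<Rightarrow> real) \<Rightarrow> real" where
  "var W X = integral\<^sup>L W (\<lambda>\<omega>. (X \<omega> - expect W X)\<^sup>2)"

definition Psi :: "real \<Rightarrow> nat \<Rightarrow> (nat \<Rightarrow> real) \<Rightarrow> real" where
  "Psi s N x = Dc s N ^ 4 * exp (- 2 * real N) * (1 + 8 * Ahat s) powr (- real N / 2)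
      * exp ((Bc s)\<^sup>2 / (2 * (1 + 8 * Ahat s)) * sqnormN N x)"

end

theory Submission
  imports Defs
begin


lemma dot_comm: "dotN N x y = dotN N y x"
  unfolding dotN_def by (simp add: mult.commute)

lemma dot_flip:
  assumes "i < N"
  shows "dotN N (flip_coord i x) y = dotN N x y - 2 * x i * y i"
proof -
  have "dotN N (flip_coord i x) y = (\<Sum>j<N. x j * y j - (if j = i then 2 * x i * y i else 0))"
    unfolding dotN_def flip_coord_def by (intro sum.cong refl) auto
  also have "\<dots> = dotN N x y - 2 * x i * y i"
    using assms by (simp add: sum_subtractf dotN_def)
  finally show ?thesis .
qed

lemma dot_ham:
  assumes "pm1_vec N x" "pm1_vec N y"
  shows "dotN N x y = real N - 2 * real (hamming N x y)"
proof -
  have "dotN N x y = (\<Sum>j<N. 1 - (if x j \<noteq> y j then 2 else 0))"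
    unfolding dotN_def
  proof (intro sum.cong refl)
    fix j assume "j \<in> {..<N}"
    then have "x j = 1 \<or> x j = -1" "y j = 1 \<or> y j = -1" using assms unfolding pm1_vec_def by auto
    then show "x j * y j = 1 - (if x j \<noteq> y j then 2 else 0)" by auto
  qed
  also have "\<dots> = real N - (\<Sum>j<N. if x j \<noteq> y j then 2 else 0)"
    by (simp add: sum_subtractf)
  also have "(\<Sum>j<N. if x j \<noteq> y j then 2 else 0) = (\<Sum>j\<in>{j\<in>{..<N}. x j \<noteq> y j}. (2::real))"
    by (rule sum.inter_filter[symmetric]) simp
  also have "{j\<in>{..<N}. x j \<noteq> y j} = {j. j < N \<and> x j \<noteq> y j}" by auto
  also have "(\<Sum>j\<in>{j. j < N \<and> x j \<noteq> y j}. (2::real)) = 2 * real (hamming N x y)"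
    unfolding hamming_def by simp
  finally show ?thesis .
qed

lemma ham_tri: "hamming N x z \<le> hamming N x y + hamming N y z"
proof -
  have "{j. j < N \<and> x j \<noteq> z j} \<subseteq> {j. j < N \<and> x j \<noteq> y j} \<union> {j. j < N \<and> y j \<noteq> z j}" by auto
  then have "card {j. j < N \<and> x j \<noteq> z j} \<le> card ({j. j < N \<and> x j \<noteq> y j} \<union> {j. j < N \<and> y j \<noteq> z j})"
    by (intro card_mono) auto
  also have "\<dots> \<le> card {j. j < N \<and> x j \<noteq> y j} + card {j. j < N \<and> y j \<noteq> z j}"
    by (rule card_Un_le)
  finally show ?thesis unfolding hamming_def .
qed

lemma ham_sym: "hamming N x y = hamming N y x"
  unfolding hamming_def by (metis)

lemma part1:
  fixes N M l i :: nat and \<tau> \<rho> :: real and mem :: "nat \<Rightarrow> nat \<Rightarrow> real" and xh :: "nat \<Rightarrow> real"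
  assumes "\<forall>\<mu>\<in>{1..M}. pm1_vec N (mem \<mu>)"
    and "\<forall>\<mu>\<in>{1..M}. \<forall>\<nu>\<in>{1..M}. \<mu> \<noteq> \<nu> \<longrightarrow> real (hamming N (mem \<mu>) (mem \<nu>)) \<ge> \<tau> * real N"
    and "real M \<le> exp (2 * real N * (\<tau> - 2 * \<rho>)) * (1 - exp (-2)) / (2 * exp 2)"
    and "l \<in> {1..M}"
    and "pm1_vec N xh"
    and "real (hamming N xh (mem l)) \<le> \<rho> * real N"
    and "i < N"
  defines "Sv \<equiv> (\<Sum>\<mu>\<in>{1..M}. exp (dotN N xh (mem \<mu>)) - exp (dotN N (flip_coord i xh) (mem \<mu>)))"
  shows "(xh i = mem l i \<longrightarrow> Sv > 0) \<and> (xh i = - mem l i \<longrightarrow> Sv < 0)"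
proof -
  define d where "d \<mu> = dotN N xh (mem \<mu>)" for \<mu>
  define t where "t \<mu> = xh i * mem \<mu> i" for \<mu>
  define f where "f \<mu> = exp (d \<mu>) * (1 - exp (- 2 * t \<mu>))" for \<mu>
  define L where "L = real N - 2 * \<tau> * real N + 2 * \<rho> * real N"
  define X where "X = 2 * real N * (\<tau> - 2 * \<rho>)"
  define q where "q = exp (-2::real)"
  define E where "E = exp (2::real)"
  have qE: "q * E = 1" unfolding q_def E_def by (simp add: exp_add[symmetric])
  have q: "0 < q" "q < 1" unfolding q_def by auto
  have E: "E > 1" unfolding E_def by simp
  have Sv: "Sv = (\<Sum>\<mu>\<in>{1..M}. f \<mu>)"
    unfolding Sv_def f_def d_def t_def dot_flip[OF assms(7)]
    by (intro sum.cong refl) (simp add: algebra_simps exp_diff exp_minus field_simps)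
  have pmi: "\<And>\<mu>. \<mu> \<in> {1..M} \<Longrightarrow> t \<mu> = 1 \<or> t \<mu> = -1"
    using assms(1,5,7) unfolding t_def pm1_vec_def by fastforce
  have dl: "d l \<ge> L + X"
  proof -
    have "d l = real N - 2 * real (hamming N xh (mem l))"
      unfolding d_def using dot_ham assms(1,4,5) by blast
    then show ?thesis using assms(6) unfolding L_def X_def by (simp add: algebra_simps)
  qed
  have dmu: "d \<mu> \<le> L" if "\<mu> \<in> {1..M} - {l}" for \<mu>
  proof -
    have m: "\<mu> \<in> {1..M}" "\<mu> \<noteq> l" using that by auto
    have "d \<mu> = real N - 2 * real (hamming N xh (mem \<mu>))"
      unfolding d_def using dot_ham assms(1,5) m by blast
    moreover have "real (hamming N (mem \<mu>) (mem l)) \<ge> \<tau> * real N"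
      using assms(2,4) m by blast
    moreover have "hamming N (mem \<mu>) (mem l) \<le> hamming N (mem \<mu>) xh + hamming N xh (mem l)"
      by (rule ham_tri)
    moreover have "hamming N (mem \<mu>) xh = hamming N xh (mem \<mu>)" by (rule ham_sym)
    ultimately show ?thesis using assms(6) unfolding L_def by linarith
  qed
  have split: "Sv = f l + (\<Sum>\<mu>\<in>{1..M} - {l}. f \<mu>)"
    unfolding Sv using assms(4) by (simp add: sum.remove)
  have card: "real (card ({1..M} - {l})) = real M - 1"
    using assms(4) by (simp add: of_nat_diff)
  have eL: "exp L > 0" by simp
  have eX: "exp (L + X) = exp X * exp L" by (simp add: exp_add)
  have Mb: "real M * E < exp X"
  proof -
    have "real M * E \<le> exp X * (1 - q) / 2"
      using assms(3) E unfolding X_def q_def E_def by (simp add: field_simps)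
    also have "\<dots> < exp X"
    proof -
      have ep: "exp X > 0" by simp
      have "0 < exp X + q * exp X" using mult_pos_pos[OF q(1) ep] ep by linarith
      then show ?thesis by (simp add: field_simps)
    qed
    finally show ?thesis .
  qed
  have M1: "real M \<ge> 1" using assms(4) by simp
  show ?thesis
  proof (intro conjI impI)
    assume h: "xh i = mem l i"
    have tl: "t l = 1"
    proof -
      have "mem l i * mem l i \<noteq> -1" using zero_le_square[of "mem l i"] by linarith
      then show ?thesis using pmi[OF assms(4)] h unfolding t_def by auto
    qed
    have fl: "f l \<ge> exp X * exp L * (1 - q)"
      unfolding f_def tl q_def using dl eX[symmetric] by simp
    have fmu: "f \<mu> \<ge> exp L * (1 - E)" if "\<mu> \<in> {1..M} - {l}" for \<mu>
    proof -
      have "exp (d \<mu>) \<le> exp L" using dmu[OF that] by simp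
      moreover have "f \<mu> \<ge> exp (d \<mu>) * (1 - E)"
        using pmi[of \<mu>] that E unfolding f_def E_def by auto
      ultimately show ?thesis using E by (smt (verit) mult_right_mono_neg)
    qed
    have "(\<Sum>\<mu>\<in>{1..M} - {l}. f \<mu>) \<ge> (\<Sum>\<mu>\<in>{1..M} - {l}. exp L * (1 - E))"
      by (rule sum_mono) (rule fmu)
    then have rest: "(\<Sum>\<mu>\<in>{1..M} - {l}. f \<mu>) \<ge> (real M - 1) * exp L * (1 - E)"
      using card by simp
    have "exp X * exp L * (1 - q) + (real M - 1) * exp L * (1 - E) > 0"
    proof -
      have "E - 1 = E * (1 - q)" using qE by (simp add: algebra_simps)
      have "exp X * (1 - q) + (real M - 1) * (1 - E) = (1 - q) * (exp X - (real M - 1) * E)"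
        using qE by (simp add: algebra_simps)
      moreover have "exp X - (real M - 1) * E > 0" using Mb E by (simp add: left_diff_distrib)
      ultimately have "exp X * (1 - q) + (real M - 1) * (1 - E) > 0" using q by simp
      then have "exp L * (exp X * (1 - q) + (real M - 1) * (1 - E)) > 0" using eL by simp
      then show ?thesis by (simp add: algebra_simps)
    qed
    then show "Sv > 0" using split fl rest by linarith
  next
    assume h: "xh i = - mem l i"
    have tl: "t l = -1"
    proof -
      have "mem l i * mem l i \<noteq> -1" using zero_le_square[of "mem l i"] by linarith
      then show ?thesis using pmi[OF assms(4)] h unfolding t_def by auto
    qed
    have fl: "f l \<le> exp X * exp L * (1 - E)"
    proof -
      have "exp (L + X) \<le> exp (d l)" using dl by simp
      then have "exp (d l) * (1 - E) \<le> exp (L + X) * (1 - E)" using E by (intro mult_right_mono_neg) auto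
      then show ?thesis unfolding f_def tl E_def eX[symmetric] by simp
    qed
    have fmu: "f \<mu> \<le> exp L * (1 - q)" if "\<mu> \<in> {1..M} - {l}" for \<mu>
    proof -
      have "exp (d \<mu>) \<le> exp L" using dmu[OF that] by simp
      moreover have "f \<mu> \<le> exp (d \<mu>) * (1 - q)"
        using pmi[of \<mu>] that E unfolding f_def E_def q_def by auto
      ultimately show ?thesis using q by (smt (verit) mult_right_mono)
    qed
    have "(\<Sum>\<mu>\<in>{1..M} - {l}. f \<mu>) \<le> (\<Sum>\<mu>\<in>{1..M} - {l}. exp L * (1 - q))"
      by (rule sum_mono) (rule fmu)
    then have rest: "(\<Sum>\<mu>\<in>{1..M} - {l}. f \<mu>) \<le> (real M - 1) * exp L * (1 - q)"
      using card by simp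
    have "exp X * exp L * (1 - E) + (real M - 1) * exp L * (1 - q) < 0"
    proof -
      have "exp X * (1 - E) + (real M - 1) * (1 - q) = (1 - q) * ((real M - 1) - E * exp X)"
        using qE by (simp add: algebra_simps)
      moreover have "(real M - 1) - E * exp X < 0"
      proof -
        have "real M < exp X" using Mb E M1 by (smt (verit) mult_le_cancel_left1)
        moreover have "exp X \<le> E * exp X" using E by simp
        ultimately show ?thesis by linarith
      qed
      ultimately have "exp X * (1 - E) + (real M - 1) * (1 - q) < 0" using q by (simp add: mult_pos_neg)
      then have "exp L * (exp X * (1 - E) + (real M - 1) * (1 - q)) < 0" using eL by (simp add: mult_pos_neg)
      then show ?thesis by (simp add: algebra_simps)
    qed
    then show "Sv < 0" using split fl rest by linarith
  qed
qed



definition gfun :: "real \<Rightarrow> real \<Rightarrow> real" where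
  "gfun a b = (1 + 2*a) powr (-1/2) * exp (b\<^sup>2 / (2*(1+2*a)))"

lemma gauss1_pt:
  fixes a b x :: real assumes a: "a \<ge> 0"
  shows "std_normal_density x * exp (-a*x\<^sup>2 + b*x) =
    gfun a b * normal_density (b/(1+2*a)) (1/sqrt(1+2*a)) x"
proof -
  define c where "c = 1 + 2*a"
  have c: "c > 0" using a by (simp add: c_def)
  have sq: "(1/sqrt c)\<^sup>2 = 1/c" using c by (simp add: power_divide)
  have e0: "- x\<^sup>2 / 2 + (-a*x\<^sup>2 + b*x) = - c * x\<^sup>2 / 2 + b*x"
    by (simp add: c_def field_simps)
  have e: "- x\<^sup>2 / 2 + (-a*x\<^sup>2 + b*x) = b\<^sup>2/(2*c) + (-(x - b/c)\<^sup>2 / (2 * (1/sqrt c)\<^sup>2))"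
    unfolding e0 sq using c by (simp add: field_simps power2_eq_square)
  have s: "sqrt (2*pi*(1/sqrt c)\<^sup>2) = sqrt (2*pi) / sqrt c"
    using c by (simp add: real_sqrt_divide power_divide)
  have p: "c powr (-1/2) = 1 / sqrt c"
    using c by (simp add: powr_minus_divide powr_half_sqrt)
  define E where "E = exp (-(x - b/c)\<^sup>2 / (2 * (1/sqrt c)\<^sup>2))"
  have "std_normal_density x * exp (-a*x\<^sup>2 + b*x) = 1/sqrt(2*pi) * exp (- x\<^sup>2 / 2 + (-a*x\<^sup>2 + b*x))"
    unfolding std_normal_density_def exp_add by simp
  also have "\<dots> = 1/sqrt(2*pi) * (exp (b\<^sup>2/(2*c)) * E)"
    unfolding e exp_add E_def by simp
  also have "\<dots> = (1 / sqrt c) * exp (b\<^sup>2/(2*c)) * (1 / (sqrt (2*pi) / sqrt c) * E)"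
    using c by (simp add: field_simps)
  also have "\<dots> = gfun a b * normal_density (b/(1+2*a)) (1/sqrt(1+2*a)) x"
    unfolding gfun_def normal_density_def c_def[symmetric] p s E_def by simp
  finally show ?thesis .
qed

lemma gauss1:
  fixes a b :: real assumes a: "a \<ge> 0"
  shows "integrable std_normal_distribution (\<lambda>x. exp (-a*x\<^sup>2 + b*x))"
    and "(\<integral>x. exp (-a*x\<^sup>2 + b*x) \<partial>std_normal_distribution) = gfun a b"
proof -
  have "integrable lborel (\<lambda>x. gfun a b * normal_density (b/(1+2*a)) (1/sqrt(1+2*a)) x)"
    using integrable_normal_density[of "1/sqrt(1+2*a)" "b/(1+2*a)"] a by simp
  then have "integrable lborel (\<lambda>x. std_normal_density x *\<^sub>R exp (-a*x\<^sup>2 + b*x))"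
    using gauss1_pt[OF a] using a by (simp del: integrable_mult_right_iff)
  then show "integrable std_normal_distribution (\<lambda>x. exp (-a*x\<^sup>2 + b*x))"
    by (subst integrable_density) auto
  have "(\<integral>x. exp (-a*x\<^sup>2 + b*x) \<partial>std_normal_distribution) =
     (\<integral>x. std_normal_density x *\<^sub>R exp (-a*x\<^sup>2 + b*x) \<partial>lborel)"
    by (subst integral_density) auto
  also have "\<dots> = (\<integral>x. gfun a b * normal_density (b/(1+2*a)) (1/sqrt(1+2*a)) x \<partial>lborel)"
    using gauss1_pt[OF a] by simp
  also have "\<dots> = gfun a b" using integral_normal_density[of "1/sqrt(1+2*a)" "b/(1+2*a)"] a by simp
  finally show "(\<integral>x. exp (-a*x\<^sup>2 + b*x) \<partial>std_normal_distribution) = gfun a b" .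
qed



definition Ef :: "nat \<Rightarrow> nat \<Rightarrow> (nat \<times> nat \<Rightarrow> real) \<Rightarrow> (nat \<times> nat \<Rightarrow> real) \<Rightarrow> (nat \<times> nat \<Rightarrow> real) \<Rightarrow> real" where
  "Ef N r \<alpha> \<beta> \<omega> = (\<Prod>p\<in>{..<r} \<times> {..<N}. exp (- \<alpha> p * (\<omega> p)\<^sup>2 + \<beta> p * \<omega> p))"

definition Pg :: "nat \<Rightarrow> nat \<Rightarrow> (nat \<times> nat \<Rightarrow> real) \<Rightarrow> (nat \<times> nat \<Rightarrow> real) \<Rightarrow> real" where
  "Pg N r \<alpha> \<beta> = (\<Prod>p\<in>{..<r} \<times> {..<N}. gfun (\<alpha> p) (\<beta> p))"

lemma prob_gauss: "prob_space (gauss_space N r)"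
  unfolding gauss_space_def
  by (intro prob_space_PiM) (simp add: real_distribution.axioms(1) real_dist_normal_dist)

interpretation psf: product_sigma_finite "\<lambda>_::nat\<times>nat. std_normal_distribution"
  unfolding product_sigma_finite_def
  using real_dist_normal_dist real_distribution.axioms(1) prob_space_imp_sigma_finite by blast

lemma Ef_int:
  assumes "\<And>p. \<alpha> p \<ge> 0"
  shows "integrable (gauss_space N r) (Ef N r \<alpha> \<beta>)"
    and "integral\<^sup>L (gauss_space N r) (Ef N r \<alpha> \<beta>) = Pg N r \<alpha> \<beta>"
proof -
  have i: "\<And>p. integrable std_normal_distribution (\<lambda>x. exp (- \<alpha> p * x\<^sup>2 + \<beta> p * x))"
    using gauss1(1) assms by simp
  show "integrable (gauss_space N r) (Ef N r \<alpha> \<beta>)"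
    unfolding gauss_space_def Ef_def
    using psf.product_integrable_prod[of "{..<r} \<times> {..<N}" "\<lambda>p x. exp (- \<alpha> p * x\<^sup>2 + \<beta> p * x)"] i
    by simp
  show "integral\<^sup>L (gauss_space N r) (Ef N r \<alpha> \<beta>) = Pg N r \<alpha> \<beta>"
    unfolding gauss_space_def Ef_def Pg_def
    using psf.product_integral_prod[of "{..<r} \<times> {..<N}" "\<lambda>p x. exp (- \<alpha> p * x\<^sup>2 + \<beta> p * x)"] i
      gauss1(2) assms by simp
qed

lemma Ef_mult: "Ef N r \<alpha>1 \<beta>1 \<omega> * Ef N r \<alpha>2 \<beta>2 \<omega> = Ef N r (\<lambda>p. \<alpha>1 p + \<alpha>2 p) (\<lambda>p. \<beta>1 p + \<beta>2 p) \<omega>"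
  unfolding Ef_def prod.distrib[symmetric] exp_add[symmetric]
  by (intro prod.cong refl) (simp add: algebra_simps)

definition aK :: "nat \<Rightarrow> real \<Rightarrow> nat \<times> nat \<Rightarrow> real" where
  "aK k c p = (if fst p = k then c else 0)"
definition bK :: "nat \<Rightarrow> (nat \<Rightarrow> real) \<Rightarrow> nat \<times> nat \<Rightarrow> real" where
  "bK k w p = (if fst p = k then w (snd p) else 0)"

lemma sum_single_k:
  fixes f :: "nat \<Rightarrow> nat \<Rightarrow> real"
  assumes "k < r"
  shows "(\<Sum>p\<in>{..<r} \<times> {..<N}. if fst p = k then f k (snd p) else 0) = (\<Sum>j<N. f k j)"
proof -
  have "(\<Sum>p\<in>{..<r} \<times> {..<N}. if fst p = k then f k (snd p) else 0)
      = (\<Sum>k'<r. \<Sum>j<N. if k' = k then f k j else 0)"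
    by (auto simp: sum.cartesian_product intro!: sum.cong)
  also have "\<dots> = (\<Sum>k'<r. if k' = k then (\<Sum>j<N. f k j) else 0)"
    by (intro sum.cong) auto
  also have "\<dots> = (\<Sum>j<N. f k j)"
    using assms by simp
  finally show ?thesis .
qed

lemma prod_single_k:
  fixes f :: "nat \<Rightarrow> nat \<Rightarrow> real"
  assumes "k < r"
  shows "(\<Prod>p\<in>{..<r} \<times> {..<N}. if fst p = k then f k (snd p) else 1) = (\<Prod>j<N. f k j)"
proof -
  have "(\<Prod>p\<in>{..<r} \<times> {..<N}. if fst p = k then f k (snd p) else 1)
      = (\<Prod>k'<r. \<Prod>j<N. if k' = k then f k j else 1)"
    by (auto simp: prod.cartesian_product intro!: prod.cong)
  also have "\<dots> = (\<Prod>k'<r. if k' = k then (\<Prod>j<N. f k j) else 1)"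
    by (intro prod.cong) auto
  also have "\<dots> = (\<Prod>j<N. f k j)"
    using assms by simp
  finally show ?thesis .
qed

lemma phi_Ef:
  assumes "k < r"
  shows "phi_fpp s N r \<omega> z k = Dc s N / sqrt (real r) * exp (Cc * sqnormN N z)
     * Ef N r (aK k (Ahat s)) (bK k (\<lambda>j. Bc s * z j)) \<omega>"
proof -
  have "Ef N r (aK k (Ahat s)) (bK k (\<lambda>j. Bc s * z j)) \<omega>
     = exp (\<Sum>p\<in>{..<r} \<times> {..<N}. if fst p = k then (- Ahat s * (\<omega> (k, snd p))\<^sup>2 + Bc s * z (snd p) * \<omega> (k, snd p)) else 0)"
    unfolding Ef_def exp_sum[symmetric, OF finite_cartesian_product[OF finite_lessThan finite_lessThan]]
    by (intro arg_cong[where f=exp] sum.cong refl) (auto simp: aK_def bK_def)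
  also have "\<dots> = exp (- Ahat s * sqnormN N (omega_vec \<omega> k) + Bc s * dotN N (omega_vec \<omega> k) z)"
  proof -
    have h: "(\<Sum>j<N. - Ahat s * (\<omega> (k,j))\<^sup>2 + Bc s * z j * \<omega> (k,j))
       = - Ahat s * (\<Sum>j<N. (\<omega> (k,j))\<^sup>2) + Bc s * (\<Sum>j<N. \<omega> (k,j) * z j)"
      unfolding sum_distrib_left sum.distrib[symmetric] by (intro sum.cong) (auto simp: algebra_simps)
    show ?thesis
      using sum_single_k[OF assms, of "\<lambda>k j. - Ahat s * (\<omega> (k, j))\<^sup>2 + Bc s * z j * \<omega> (k, j)" N]
      unfolding sqnormN_def dotN_def omega_vec_def h by simp
  qed
  finally show ?thesis
    unfolding phi_fpp_def by (simp add: exp_add)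
qed

lemma Pg_single:
  assumes "k < r" "c \<ge> 0"
  shows "Pg N r (aK k c) (bK k w) = (1 + 2*c) powr (- real N / 2) * exp ((\<Sum>j<N. (w j)\<^sup>2) / (2*(1+2*c)))"
proof -
  have "Pg N r (aK k c) (bK k w) = (\<Prod>p\<in>{..<r} \<times> {..<N}. if fst p = k then gfun c (w (snd p)) else 1)"
    unfolding Pg_def by (intro prod.cong refl) (auto simp: aK_def bK_def gfun_def)
  also have "\<dots> = (\<Prod>j<N. gfun c (w j))"
    using prod_single_k[OF assms(1), of "\<lambda>_ j. gfun c (w j)" N] by simp
  also have "\<dots> = ((1 + 2*c) powr (-1/2)) ^ N * exp (\<Sum>j<N. (w j)\<^sup>2 / (2*(1+2*c)))"
    unfolding gfun_def prod.distrib by (simp add: exp_sum)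
  also have "\<dots> = (1 + 2*c) powr (- real N / 2) * exp ((\<Sum>j<N. (w j)\<^sup>2) / (2*(1+2*c)))"
    using assms(2) by (simp add: powr_realpow[symmetric] powr_powr sum_divide_distrib)
  finally show ?thesis .
qed



definition Kc :: "real \<Rightarrow> nat \<Rightarrow> nat \<Rightarrow> (nat \<Rightarrow> real) \<Rightarrow> real" where
  "Kc s N r z = Dc s N / sqrt (real r) * exp (Cc * sqnormN N z)"

lemma aK_add: "(\<lambda>p. aK k c p + aK k d p) = aK k (c + d)"
  by (auto simp: aK_def)
lemma bK_add: "(\<lambda>p. bK k w p + bK k v p) = bK k (\<lambda>j. w j + v j)"
  by (auto simp: bK_def)
lemma aK_nonneg: "c \<ge> 0 \<Longrightarrow> aK k c p \<ge> 0" by (simp add: aK_def)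

lemma sqnorm_pm1: "pm1_vec N z \<Longrightarrow> sqnormN N z = real N"
  unfolding pm1_vec_def sqnormN_def
  by (subst sum.cong[OF refl, of _ _ "\<lambda>_. 1"]) auto

lemma sqnorm_sum2_pm1:
  assumes "pm1_vec N a" "pm1_vec N b"
  shows "(\<Sum>j<N. (a j + b j)\<^sup>2) = 2 * real N + 2 * dotN N a b"
proof -
  have "(\<Sum>j<N. (a j + b j)\<^sup>2) = (\<Sum>j<N. 2 + 2 * (a j * b j))"
  proof (intro sum.cong refl)
    fix j assume "j \<in> {..<N}"
    then have "a j = 1 \<or> a j = -1" "b j = 1 \<or> b j = -1" using assms unfolding pm1_vec_def by auto
    then show "(a j + b j)\<^sup>2 = 2 + 2*(a j * b j)" by (auto simp: power2_eq_square)
  qed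
  then show ?thesis by (simp add: sum.distrib dotN_def sum_distrib_left)
qed

lemma Ahat_pos: "0 < s \<Longrightarrow> s < 1 \<Longrightarrow> Ahat s > 0"
  by (simp add: Ahat_def field_simps)

lemma pair_val:
  assumes "0 < s" "s < 1" "k < r" "pm1_vec N a" "pm1_vec N b"
  shows "Kc s N r a * Kc s N r b * Pg N r (aK k (2 * Ahat s)) (bK k (\<lambda>j. Bc s * a j + Bc s * b j))
     = exp (dotN N a b) / real r"
proof -
  define c where "c = 1 + 4 * Ahat s"
  have c: "c > 0" using Ahat_pos[OF assms(1,2)] by (simp add: c_def)
  have B2: "(Bc s)\<^sup>2 = c" using c by (simp add: Bc_def c_def)
  have D2: "(Dc s N)\<^sup>2 = c powr (real N / 2)"
    using c by (simp add: Dc_def c_def powr_realpow[symmetric] powr_powr)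
  have r: "real r > 0" using assms by simp
  have sum: "(\<Sum>j<N. (Bc s * a j + Bc s * b j)\<^sup>2) = c * (2 * real N + 2 * dotN N a b)"
  proof -
    have "(\<Sum>j<N. (Bc s * a j + Bc s * b j)\<^sup>2) = (\<Sum>j<N. (Bc s)\<^sup>2 * (a j + b j)\<^sup>2)"
      by (intro sum.cong refl) (simp add: power2_eq_square algebra_simps)
    then show ?thesis using sqnorm_sum2_pm1[OF assms(4,5)] B2 by (simp add: sum_distrib_left[symmetric])
  qed
  have P: "Pg N r (aK k (2 * Ahat s)) (bK k (\<lambda>j. Bc s * a j + Bc s * b j))
      = c powr (- real N / 2) * exp (real N + dotN N a b)"
    using Pg_single[OF assms(3), where c="2 * Ahat s" and w="\<lambda>j. Bc s * a j + Bc s * b j" and N=N] Ahat_pos[OF assms(1,2)]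
  proof -
    have e: "1 + 2 * (2 * Ahat s) = c" by (simp add: c_def)
    have f: "c * (2 * real N + 2 * dotN N a b) / (2 * c) = real N + dotN N a b"
      using c by (simp add: field_simps)
    show ?thesis
      using Pg_single[OF assms(3), where c="2 * Ahat s" and w="\<lambda>j. Bc s * a j + Bc s * b j" and N=N] Ahat_pos[OF assms(1,2)]
      unfolding sum e f by simp
  qed
  have "Kc s N r a * Kc s N r b = (Dc s N)\<^sup>2 / real r * exp (- real N)"
    unfolding Kc_def sqnorm_pm1[OF assms(4)] sqnorm_pm1[OF assms(5)] Cc_def
    using r by (simp add: power2_eq_square field_simps mult_exp_exp[symmetric] exp_add[symmetric])
  then have "Kc s N r a * Kc s N r b * Pg N r (aK k (2 * Ahat s)) (bK k (\<lambda>j. Bc s * a j + Bc s * b j))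
     = (c powr (real N / 2) * c powr (- real N / 2)) * (exp (- real N) * exp (real N + dotN N a b)) / real r"
    unfolding P D2 by (simp add: field_simps)
  also have "\<dots> = exp (dotN N a b) / real r"
    using c by (simp add: powr_add[symmetric] exp_add[symmetric])
  finally show ?thesis .
qed



lemma Pg_split:
  assumes "k \<noteq> k'"
  shows "Pg N r (\<lambda>p. aK k c p + aK k' c' p) (\<lambda>p. bK k w p + bK k' w' p)
       = Pg N r (aK k c) (bK k w) * Pg N r (aK k' c') (bK k' w')"
  unfolding Pg_def prod.distrib[symmetric]
  using assms by (intro prod.cong refl) (auto simp: aK_def bK_def gfun_def)

lemma FF_Ef:
  assumes "k < r"
  shows "phi_fpp s N r \<omega> a k * phi_fpp s N r \<omega> b k
    = Kc s N r a * Kc s N r b * Ef N r (aK k (2 * Ahat s)) (bK k (\<lambda>j. Bc s * a j + Bc s * b j)) \<omega>"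
proof -
  have "phi_fpp s N r \<omega> a k * phi_fpp s N r \<omega> b k
    = (Kc s N r a * Ef N r (aK k (Ahat s)) (bK k (\<lambda>j. Bc s * a j)) \<omega>) * (Kc s N r b * Ef N r (aK k (Ahat s)) (bK k (\<lambda>j. Bc s * b j)) \<omega>)"
    unfolding phi_Ef[OF assms] Kc_def[symmetric] ..
  also have "\<dots> = Kc s N r a * Kc s N r b * (Ef N r (aK k (Ahat s)) (bK k (\<lambda>j. Bc s * a j)) \<omega> * Ef N r (aK k (Ahat s)) (bK k (\<lambda>j. Bc s * b j)) \<omega>)"
    by (simp only: ac_simps)
  also have "Ef N r (aK k (Ahat s)) (bK k (\<lambda>j. Bc s * a j)) \<omega> * Ef N r (aK k (Ahat s)) (bK k (\<lambda>j. Bc s * b j)) \<omega>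
     = Ef N r (aK k (Ahat s + Ahat s)) (bK k (\<lambda>j. Bc s * a j + Bc s * b j)) \<omega>"
    unfolding Ef_mult aK_add bK_add ..
  also have "Ahat s + Ahat s = 2 * Ahat s" by simp
  finally show ?thesis .
qed

lemma pair_int:
  assumes "0 < s" "s < 1" "k < r" "pm1_vec N a" "pm1_vec N b"
  shows "integrable (gauss_space N r) (\<lambda>\<omega>. phi_fpp s N r \<omega> a k * phi_fpp s N r \<omega> b k)"
    and "(\<integral>\<omega>. phi_fpp s N r \<omega> a k * phi_fpp s N r \<omega> b k \<partial>gauss_space N r) = exp (dotN N a b) / real r"
proof -
  have nn: "\<And>p. aK k (2 * Ahat s) p \<ge> 0" using Ahat_pos[OF assms(1,2)] by (simp add: aK_def)
  show "integrable (gauss_space N r) (\<lambda>\<omega>. phi_fpp s N r \<omega> a k * phi_fpp s N r \<omega> b k)"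
    unfolding FF_Ef[OF assms(3)] using Ef_int(1)[OF nn] by simp
  show "(\<integral>\<omega>. phi_fpp s N r \<omega> a k * phi_fpp s N r \<omega> b k \<partial>gauss_space N r) = exp (dotN N a b) / real r"
    unfolding FF_Ef[OF assms(3)] using Ef_int(2)[OF nn] pair_val[OF assms] by simp
qed

lemma quad_int:
  assumes "0 < s" "s < 1" "k < r" "k' < r" "pm1_vec N a" "pm1_vec N b" "pm1_vec N c" "pm1_vec N d"
  shows "integrable (gauss_space N r) (\<lambda>\<omega>. (phi_fpp s N r \<omega> a k * phi_fpp s N r \<omega> b k) * (phi_fpp s N r \<omega> c k' * phi_fpp s N r \<omega> d k'))"
    and "(\<integral>\<omega>. (phi_fpp s N r \<omega> a k * phi_fpp s N r \<omega> b k) * (phi_fpp s N r \<omega> c k' * phi_fpp s N r \<omega> d k') \<partial>gauss_space N r)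
      = (if k = k' then Psi s N (\<lambda>j. a j + b j + c j + d j) / (real r)\<^sup>2
         else exp (dotN N a b) * exp (dotN N c d) / (real r)\<^sup>2)"
proof -
  define A where "A = Ahat s"
  have A: "A > 0" using Ahat_pos[OF assms(1,2)] by (simp add: A_def)
  define wab where "wab = (\<lambda>j. Bc s * a j + Bc s * b j)"
  define wcd where "wcd = (\<lambda>j. Bc s * c j + Bc s * d j)"
  define KK where "KK = Kc s N r a * Kc s N r b * (Kc s N r c * Kc s N r d)"
  have eq: "(\<lambda>\<omega>. (phi_fpp s N r \<omega> a k * phi_fpp s N r \<omega> b k) * (phi_fpp s N r \<omega> c k' * phi_fpp s N r \<omega> d k'))
     = (\<lambda>\<omega>. KK * Ef N r (\<lambda>p. aK k (2*A) p + aK k' (2*A) p) (\<lambda>p. bK k wab p + bK k' wcd p) \<omega>)"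
  proof (rule ext)
    fix \<omega>
    have m: "Ef N r (aK k (2 * Ahat s)) (bK k (\<lambda>j. Bc s * a j + Bc s * b j)) \<omega> * Ef N r (aK k' (2 * Ahat s)) (bK k' (\<lambda>j. Bc s * c j + Bc s * d j)) \<omega>
      = Ef N r (\<lambda>p. aK k (2 * Ahat s) p + aK k' (2 * Ahat s) p) (\<lambda>p. bK k (\<lambda>j. Bc s * a j + Bc s * b j) p + bK k' (\<lambda>j. Bc s * c j + Bc s * d j) p) \<omega>"
      by (rule Ef_mult)
    show "(phi_fpp s N r \<omega> a k * phi_fpp s N r \<omega> b k) * (phi_fpp s N r \<omega> c k' * phi_fpp s N r \<omega> d k')
      = KK * Ef N r (\<lambda>p. aK k (2*A) p + aK k' (2*A) p) (\<lambda>p. bK k wab p + bK k' wcd p) \<omega>"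
      unfolding KK_def A_def wab_def wcd_def m[symmetric] FF_Ef[OF assms(3)] FF_Ef[OF assms(4)]
      by (simp only: ac_simps)
  qed
  have nn: "\<And>p. aK k (2*A) p + aK k' (2*A) p \<ge> 0" using A by (simp add: aK_def)
  show "integrable (gauss_space N r) (\<lambda>\<omega>. (phi_fpp s N r \<omega> a k * phi_fpp s N r \<omega> b k) * (phi_fpp s N r \<omega> c k' * phi_fpp s N r \<omega> d k'))"
    unfolding eq using Ef_int(1)[OF nn] by simp
  have I: "(\<integral>\<omega>. (phi_fpp s N r \<omega> a k * phi_fpp s N r \<omega> b k) * (phi_fpp s N r \<omega> c k' * phi_fpp s N r \<omega> d k') \<partial>gauss_space N r)
     = KK * Pg N r (\<lambda>p. aK k (2*A) p + aK k' (2*A) p) (\<lambda>p. bK k wab p + bK k' wcd p)"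
    unfolding eq using Ef_int(2)[OF nn] by simp
  show "(\<integral>\<omega>. (phi_fpp s N r \<omega> a k * phi_fpp s N r \<omega> b k) * (phi_fpp s N r \<omega> c k' * phi_fpp s N r \<omega> d k') \<partial>gauss_space N r)
      = (if k = k' then Psi s N (\<lambda>j. a j + b j + c j + d j) / (real r)\<^sup>2
         else exp (dotN N a b) * exp (dotN N c d) / (real r)\<^sup>2)"
  proof (cases "k = k'")
    case False
    have "KK * Pg N r (\<lambda>p. aK k (2*A) p + aK k' (2*A) p) (\<lambda>p. bK k wab p + bK k' wcd p)
      = (Kc s N r a * Kc s N r b * Pg N r (aK k (2*A)) (bK k wab)) * (Kc s N r c * Kc s N r d * Pg N r (aK k' (2*A)) (bK k' wcd))"
      unfolding Pg_split[OF False] KK_def by simp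
    also have "\<dots> = exp (dotN N a b) / real r * (exp (dotN N c d) / real r)"
      unfolding A_def wab_def wcd_def
      using pair_val[OF assms(1,2,3,5,6)] pair_val[OF assms(1,2,4,7,8)] by simp
    finally show ?thesis using I False by (simp add: power2_eq_square)
  next
    case True
    define c8 where "c8 = 1 + 8 * A"
    have c8: "c8 > 0" using A by (simp add: c8_def)
    have P: "Pg N r (\<lambda>p. aK k (2*A) p + aK k' (2*A) p) (\<lambda>p. bK k wab p + bK k' wcd p)
       = c8 powr (- real N / 2) * exp ((Bc s)\<^sup>2 / (2 * c8) * sqnormN N (\<lambda>j. a j + b j + c j + d j))"
    proof -
      have e1: "1 + 2 * (2 * A + 2 * A) = c8" by (simp add: c8_def)
      have e2: "(\<Sum>j<N. (wab j + wcd j)\<^sup>2) = (Bc s)\<^sup>2 * sqnormN N (\<lambda>j. a j + b j + c j + d j)"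
        unfolding sqnormN_def sum_distrib_left wab_def wcd_def
        by (intro sum.cong refl) (simp add: power2_eq_square algebra_simps)
      show ?thesis
        unfolding True aK_add bK_add
        using Pg_single[OF assms(4), where c="2*A + 2*A" and w="\<lambda>j. wab j + wcd j" and N=N] A
        unfolding e1 e2 by simp
    qed
    have r: "real r > 0" using assms by simp
    define X where "X = Dc s N / sqrt (real r) * exp (- real N / 2)"
    have Kx: "\<And>z. pm1_vec N z \<Longrightarrow> Kc s N r z = X"
      unfolding Kc_def X_def Cc_def by (simp add: sqnorm_pm1)
    have X4: "X * X * (X * X) = (Dc s N)^4 / (real r)\<^sup>2 * exp (- 2 * real N)"
    proof -
      have "X * X * (X * X) = (Dc s N)^4 / (sqrt (real r))^4 * (exp (- real N / 2))^4"
      proof -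
        have "X * X * (X * X) = X^4" by (simp add: power4_eq_xxxx)
        also have "\<dots> = (Dc s N)^4 / (sqrt (real r))^4 * (exp (- real N / 2))^4"
          unfolding X_def by (simp add: power_mult_distrib power_divide)
        finally show ?thesis .
      qed
      also have "(sqrt (real r))^4 = (real r)\<^sup>2"
        by (simp add: power4_eq_xxxx power2_eq_square)
      also have "(exp (- real N / 2))^4 = exp (- 2 * real N)"
        unfolding exp_of_nat_mult[symmetric] by simp
      finally show ?thesis .
    qed
    have K: "KK = (Dc s N)^4 / (real r)\<^sup>2 * exp (- 2 * real N)"
      unfolding KK_def Kx[OF assms(5)] Kx[OF assms(6)] Kx[OF assms(7)] Kx[OF assms(8)] X4 ..
    have fin: "\<And>(D::real) E P Q R. D / R * E * (P * Q) = D * E * P * Q / R" by simp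
    have "KK * Pg N r (\<lambda>p. aK k (2*A) p + aK k' (2*A) p) (\<lambda>p. bK k wab p + bK k' wcd p)
       = Psi s N (\<lambda>j. a j + b j + c j + d j) / (real r)\<^sup>2"
      apply (subst P)
      unfolding K Psi_def c8_def A_def fin by simp
    then show ?thesis using I True by simp
  qed
qed



lemma sum_if_eq_k:
  fixes A B :: real
  assumes "k < r"
  shows "(\<Sum>k'<r. if k = k' then A else B) = A + (real r - 1) * B"
proof -
  have "(\<Sum>k'<r. if k = k' then A else B) = (if k = k then A else B) + (\<Sum>k'\<in>{..<r} - {k}. if k = k' then A else B)"
    using assms by (subst sum.remove[of _ k]) auto
  also have "(\<Sum>k'\<in>{..<r} - {k}. if k = k' then A else B) = (\<Sum>k'\<in>{..<r} - {k}. B)"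
    by (intro sum.cong) auto
  also have "\<dots> = (real r - 1) * B"
    using assms by (simp add: of_nat_diff)
  finally show ?thesis by simp
qed

context
  fixes s :: real and N r M :: nat and mem :: "nat \<Rightarrow> nat \<Rightarrow> real" and xh xt :: "nat \<Rightarrow> real"
  assumes s0: "0 < s" and s1: "s < 1" and r0: "r > 0"
    and pmm: "\<forall>\<mu>\<in>{1..M}. pm1_vec N (mem \<mu>)" and pmh: "pm1_vec N xh" and pmt: "pm1_vec N xt"
begin

abbreviation "F k z \<omega> \<equiv> phi_fpp s N r \<omega> z k"

definition T :: "nat \<Rightarrow> nat \<Rightarrow> (nat \<times> nat \<Rightarrow> real) \<Rightarrow> real" where
  "T k \<mu> \<omega> = F k xh \<omega> * F k (mem \<mu>) \<omega> - F k xt \<omega> * F k (mem \<mu>) \<omega>"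

lemma Delta_eq:
  "E_rand s N r \<omega> M mem xt - E_rand s N r \<omega> M mem xh = (\<Sum>k<r. \<Sum>\<mu>\<in>{1..M}. T k \<mu> \<omega>)"
  unfolding E_rand_def T_def sum_subtractf[symmetric]
proof (intro sum.cong refl)
  fix k
  have "(\<Sum>\<mu>\<in>{1..M}. F k xh \<omega> * F k (mem \<mu>) \<omega> - F k xt \<omega> * F k (mem \<mu>) \<omega>)
    = F k xh \<omega> * (\<Sum>\<mu>\<in>{1..M}. F k (mem \<mu>) \<omega>) - F k xt \<omega> * (\<Sum>\<mu>\<in>{1..M}. F k (mem \<mu>) \<omega>)"
    by (simp add: sum_subtractf sum_distrib_left)
  then show "F k xt \<omega> * - (\<Sum>\<mu>\<in>{1..M}. F k (mem \<mu>) \<omega>) - F k xh \<omega> * - (\<Sum>\<mu>\<in>{1..M}. F k (mem \<mu>) \<omega>)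
    = (\<Sum>\<mu>\<in>{1..M}. F k xh \<omega> * F k (mem \<mu>) \<omega> - F k xt \<omega> * F k (mem \<mu>) \<omega>)"
    by (simp add: algebra_simps)
qed

lemma T_int:
  assumes "k < r" "\<mu> \<in> {1..M}"
  shows "integrable (gauss_space N r) (T k \<mu>)"
    and "integral\<^sup>L (gauss_space N r) (T k \<mu>) = (exp (dotN N xh (mem \<mu>)) - exp (dotN N xt (mem \<mu>))) / real r"
proof -
  have pm: "pm1_vec N (mem \<mu>)" using pmm assms by auto
  note h = pair_int[OF s0 s1 assms(1) pmh pm] and t = pair_int[OF s0 s1 assms(1) pmt pm]
  show "integrable (gauss_space N r) (T k \<mu>)"
    unfolding T_def[abs_def] using h(1) t(1) by simp
  show "integral\<^sup>L (gauss_space N r) (T k \<mu>) = (exp (dotN N xh (mem \<mu>)) - exp (dotN N xt (mem \<mu>))) / real r"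
    unfolding T_def[abs_def] using h t by (simp add: diff_divide_distrib)
qed

definition S :: real where
  "S = (\<Sum>\<mu>\<in>{1..M}. exp (dotN N xh (mem \<mu>)) - exp (dotN N xt (mem \<mu>)))"

lemma Delta_int: "integrable (gauss_space N r) (\<lambda>\<omega>. \<Sum>k<r. \<Sum>\<mu>\<in>{1..M}. T k \<mu> \<omega>)"
  by (intro Bochner_Integration.integrable_sum) (auto intro: T_int(1))

lemma Delta_exp: "(\<integral>\<omega>. (\<Sum>k<r. \<Sum>\<mu>\<in>{1..M}. T k \<mu> \<omega>) \<partial>gauss_space N r) = S"
proof -
  have "(\<integral>\<omega>. (\<Sum>k<r. \<Sum>\<mu>\<in>{1..M}. T k \<mu> \<omega>) \<partial>gauss_space N r)
     = (\<Sum>k<r. \<Sum>\<mu>\<in>{1..M}. integral\<^sup>L (gauss_space N r) (T k \<mu>))"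
    apply (subst Bochner_Integration.integral_sum)
     apply (intro Bochner_Integration.integrable_sum, auto intro: T_int(1))[1]
    apply (intro sum.cong refl)
    apply (subst Bochner_Integration.integral_sum)
     apply (auto intro: T_int(1))
    done
  also have "\<dots> = (\<Sum>k<r. \<Sum>\<mu>\<in>{1..M}. (exp (dotN N xh (mem \<mu>)) - exp (dotN N xt (mem \<mu>))) / real r)"
    using T_int(2) by (intro sum.cong refl) auto
  also have "\<dots> = S"
    using r0 by (simp add: S_def sum_divide_distrib[symmetric])
  finally show ?thesis .
qed


definition G1 :: "nat \<Rightarrow> nat \<Rightarrow> real" where
  "G1 \<mu>1 \<mu>2 = Psi s N (\<lambda>j. xh j + mem \<mu>1 j + xh j + mem \<mu>2 j) - Psi s N (\<lambda>j. xh j + mem \<mu>1 j + xt j + mem \<mu>2 j)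
     - Psi s N (\<lambda>j. xt j + mem \<mu>1 j + xh j + mem \<mu>2 j) + Psi s N (\<lambda>j. xt j + mem \<mu>1 j + xt j + mem \<mu>2 j)"

definition G2 :: "nat \<Rightarrow> nat \<Rightarrow> real" where
  "G2 \<mu>1 \<mu>2 = (exp (dotN N xh (mem \<mu>1)) - exp (dotN N xt (mem \<mu>1))) * (exp (dotN N xh (mem \<mu>2)) - exp (dotN N xt (mem \<mu>2)))"

lemma TT_int:
  assumes "k < r" "k' < r" "\<mu>1 \<in> {1..M}" "\<mu>2 \<in> {1..M}"
  shows "integrable (gauss_space N r) (\<lambda>\<omega>. T k \<mu>1 \<omega> * T k' \<mu>2 \<omega>)"
    and "(\<integral>\<omega>. T k \<mu>1 \<omega> * T k' \<mu>2 \<omega> \<partial>gauss_space N r) = (if k = k' then G1 \<mu>1 \<mu>2 / (real r)\<^sup>2 else G2 \<mu>1 \<mu>2 / (real r)\<^sup>2)"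
proof -
  have p1: "pm1_vec N (mem \<mu>1)" and p2: "pm1_vec N (mem \<mu>2)" using pmm assms by auto
  have eq: "(\<lambda>\<omega>. T k \<mu>1 \<omega> * T k' \<mu>2 \<omega>) = (\<lambda>\<omega>.
      (F k xh \<omega> * F k (mem \<mu>1) \<omega>) * (F k' xh \<omega> * F k' (mem \<mu>2) \<omega>)
    - (F k xh \<omega> * F k (mem \<mu>1) \<omega>) * (F k' xt \<omega> * F k' (mem \<mu>2) \<omega>)
    - (F k xt \<omega> * F k (mem \<mu>1) \<omega>) * (F k' xh \<omega> * F k' (mem \<mu>2) \<omega>)
    + (F k xt \<omega> * F k (mem \<mu>1) \<omega>) * (F k' xt \<omega> * F k' (mem \<mu>2) \<omega>))"
    unfolding T_def by (simp add: algebra_simps)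
  note q1 = quad_int[OF s0 s1 assms(1,2) pmh p1 pmh p2]
  note q2 = quad_int[OF s0 s1 assms(1,2) pmh p1 pmt p2]
  note q3 = quad_int[OF s0 s1 assms(1,2) pmt p1 pmh p2]
  note q4 = quad_int[OF s0 s1 assms(1,2) pmt p1 pmt p2]
  show "integrable (gauss_space N r) (\<lambda>\<omega>. T k \<mu>1 \<omega> * T k' \<mu>2 \<omega>)"
    unfolding eq using q1(1) q2(1) q3(1) q4(1) by simp
  show "(\<integral>\<omega>. T k \<mu>1 \<omega> * T k' \<mu>2 \<omega> \<partial>gauss_space N r) = (if k = k' then G1 \<mu>1 \<mu>2 / (real r)\<^sup>2 else G2 \<mu>1 \<mu>2 / (real r)\<^sup>2)"
    unfolding eq using q1 q2 q3 q4
    by (simp add: G1_def G2_def diff_divide_distrib add_divide_distrib algebra_simps)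
qed

lemma int_sum2:
  fixes f :: "'i \<Rightarrow> 'j \<Rightarrow> 'a \<Rightarrow> real"
  assumes "finite A" "finite B" "\<And>a b. a \<in> A \<Longrightarrow> b \<in> B \<Longrightarrow> integrable Mm (f a b)"
  shows "integrable Mm (\<lambda>x. \<Sum>a\<in>A. \<Sum>b\<in>B. f a b x)"
    and "(\<integral>x. (\<Sum>a\<in>A. \<Sum>b\<in>B. f a b x) \<partial>Mm) = (\<Sum>a\<in>A. \<Sum>b\<in>B. integral\<^sup>L Mm (f a b))"
proof -
  show "integrable Mm (\<lambda>x. \<Sum>a\<in>A. \<Sum>b\<in>B. f a b x)"
    by (intro Bochner_Integration.integrable_sum) (auto intro: assms(3))
  show "(\<integral>x. (\<Sum>a\<in>A. \<Sum>b\<in>B. f a b x) \<partial>Mm) = (\<Sum>a\<in>A. \<Sum>b\<in>B. integral\<^sup>L Mm (f a b))"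
    apply (subst Bochner_Integration.integral_sum)
     apply (intro Bochner_Integration.integrable_sum, auto intro: assms(3))[1]
    apply (intro sum.cong refl)
    apply (subst Bochner_Integration.integral_sum)
     apply (auto intro: assms(3))
    done
qed

definition SG1 where "SG1 = (\<Sum>\<mu>1\<in>{1..M}. \<Sum>\<mu>2\<in>{1..M}. G1 \<mu>1 \<mu>2)"

lemma Delta_sq:
  shows "integrable (gauss_space N r) (\<lambda>\<omega>. (\<Sum>k<r. \<Sum>\<mu>\<in>{1..M}. T k \<mu> \<omega>)\<^sup>2)"
    and "(\<integral>\<omega>. (\<Sum>k<r. \<Sum>\<mu>\<in>{1..M}. T k \<mu> \<omega>)\<^sup>2 \<partial>gauss_space N r) = (SG1 + (real r - 1) * S\<^sup>2) / real r"
proof -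
  have sq: "\<And>\<omega>. (\<Sum>k<r. \<Sum>\<mu>\<in>{1..M}. T k \<mu> \<omega>)\<^sup>2
     = (\<Sum>k<r. \<Sum>k'<r. \<Sum>\<mu>1\<in>{1..M}. \<Sum>\<mu>2\<in>{1..M}. T k \<mu>1 \<omega> * T k' \<mu>2 \<omega>)"
    unfolding power2_eq_square sum_product ..
  have inner: "\<And>k k'. k < r \<Longrightarrow> k' < r \<Longrightarrow>
      integrable (gauss_space N r) (\<lambda>\<omega>. \<Sum>\<mu>1\<in>{1..M}. \<Sum>\<mu>2\<in>{1..M}. T k \<mu>1 \<omega> * T k' \<mu>2 \<omega>)
    \<and> (\<integral>\<omega>. (\<Sum>\<mu>1\<in>{1..M}. \<Sum>\<mu>2\<in>{1..M}. T k \<mu>1 \<omega> * T k' \<mu>2 \<omega>) \<partial>gauss_space N r)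
       = (if k = k' then SG1 / (real r)\<^sup>2 else S\<^sup>2 / (real r)\<^sup>2)"
  proof -
    fix k k' assume kk: "k < r" "k' < r"
    note I = int_sum2[of "{1..M}" "{1..M}" "gauss_space N r" "\<lambda>\<mu>1 \<mu>2 \<omega>. T k \<mu>1 \<omega> * T k' \<mu>2 \<omega>"]
    have i: "integrable (gauss_space N r) (\<lambda>\<omega>. \<Sum>\<mu>1\<in>{1..M}. \<Sum>\<mu>2\<in>{1..M}. T k \<mu>1 \<omega> * T k' \<mu>2 \<omega>)"
      using I(1) TT_int(1)[OF kk] by simp
    have "(\<integral>\<omega>. (\<Sum>\<mu>1\<in>{1..M}. \<Sum>\<mu>2\<in>{1..M}. T k \<mu>1 \<omega> * T k' \<mu>2 \<omega>) \<partial>gauss_space N r)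
       = (\<Sum>\<mu>1\<in>{1..M}. \<Sum>\<mu>2\<in>{1..M}. if k = k' then G1 \<mu>1 \<mu>2 / (real r)\<^sup>2 else G2 \<mu>1 \<mu>2 / (real r)\<^sup>2)"
      using I(2) TT_int[OF kk] by simp
    also have "\<dots> = (if k = k' then SG1 / (real r)\<^sup>2 else S\<^sup>2 / (real r)\<^sup>2)"
    proof (cases "k = k'")
      case True then show ?thesis by (simp add: SG1_def sum_divide_distrib)
    next
      case False
      have "S\<^sup>2 = (\<Sum>\<mu>1\<in>{1..M}. \<Sum>\<mu>2\<in>{1..M}. G2 \<mu>1 \<mu>2)"
        unfolding S_def G2_def power2_eq_square sum_product ..
      with False show ?thesis by (simp add: sum_divide_distrib)
    qed
    finally show "?thesis k k'" using i by simp
  qed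
  note J = int_sum2[of "{..<r}" "{..<r}" "gauss_space N r"
      "\<lambda>k k' \<omega>. \<Sum>\<mu>1\<in>{1..M}. \<Sum>\<mu>2\<in>{1..M}. T k \<mu>1 \<omega> * T k' \<mu>2 \<omega>"]
  show "integrable (gauss_space N r) (\<lambda>\<omega>. (\<Sum>k<r. \<Sum>\<mu>\<in>{1..M}. T k \<mu> \<omega>)\<^sup>2)"
    unfolding sq using J(1) inner by simp
  have "(\<integral>\<omega>. (\<Sum>k<r. \<Sum>\<mu>\<in>{1..M}. T k \<mu> \<omega>)\<^sup>2 \<partial>gauss_space N r)
      = (\<Sum>k<r. \<Sum>k'<r. if k = k' then SG1 / (real r)\<^sup>2 else S\<^sup>2 / (real r)\<^sup>2)"
    unfolding sq using J(2) inner by simp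
  also have "\<dots> = (\<Sum>k<r. SG1 / (real r)\<^sup>2 + (real r - 1) * (S\<^sup>2 / (real r)\<^sup>2))"
    by (intro sum.cong refl) (simp add: sum_if_eq_k)
  also have "\<dots> = (SG1 + (real r - 1) * S\<^sup>2) / real r"
    using r0 by (simp add: power2_eq_square field_simps)
  finally show "(\<integral>\<omega>. (\<Sum>k<r. \<Sum>\<mu>\<in>{1..M}. T k \<mu> \<omega>)\<^sup>2 \<partial>gauss_space N r) = (SG1 + (real r - 1) * S\<^sup>2) / real r" .
qed

lemma Delta_var:
  "var (gauss_space N r) (\<lambda>\<omega>. \<Sum>k<r. \<Sum>\<mu>\<in>{1..M}. T k \<mu> \<omega>) = (SG1 - S\<^sup>2) / real r"
proof -
  interpret prob_space "gauss_space N r" by (rule prob_gauss)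
  have "var (gauss_space N r) (\<lambda>\<omega>. \<Sum>k<r. \<Sum>\<mu>\<in>{1..M}. T k \<mu> \<omega>)
     = (SG1 + (real r - 1) * S\<^sup>2) / real r - S\<^sup>2"
    unfolding var_def expect_def
    using variance_eq[OF Delta_int Delta_sq(1)] Delta_sq(2) Delta_exp by simp
  also have "\<dots> = (SG1 - S\<^sup>2) / real r"
    using r0 by (simp add: field_simps)
  finally show ?thesis .
qed

end

theorem theorem2:
  fixes N M r l i :: nat and \<tau> \<rho> s :: real
    and mem :: "nat \<Rightarrow> nat \<Rightarrow> real" and xh :: "nat \<Rightarrow> real"
  assumes "N > 0" and "M > 0" and "r > 0"
    and "\<forall>\<mu>\<in>{1..M}. pm1_vec N (mem \<mu>)"
    and "\<tau> > 0"
    and "\<forall>\<mu>\<in>{1..M}. \<forall>\<nu>\<in>{1..M}. \<mu> \<noteq> \<nu> \<longrightarrow> real (hamming N (mem \<mu>) (mem \<nu>)) \<ge> \<tau> * real N"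
    and "0 < \<rho>" and "\<rho> < \<tau> / 2"
    and "real M \<le> exp (2 * real N * (\<tau> - 2 * \<rho>)) * (1 - exp (-2)) / (2 * exp 2)"
    and "0 < s" and "s < 1"
    and "l \<in> {1..M}"
    and "pm1_vec N xh"
    and "real (hamming N xh (mem l)) \<le> \<rho> * real N"
    and "i < N"
  shows
    "let xt = flip_coord i xh;
         W = gauss_space N r;
         \<Delta> = (\<lambda>\<omega>. E_rand s N r \<omega> M mem xt - E_rand s N r \<omega> M mem xh);
         V1 = (\<Sum>\<mu>1\<in>{1..M}. \<Sum>\<mu>2\<in>{1..M}. Psi s N (\<lambda>j. mem \<mu>1 j + mem \<mu>2 j + 2 * xh j));
         V2 = (\<Sum>\<mu>1\<in>{1..M}. \<Sum>\<mu>2\<in>{1..M}. Psi s N (\<lambda>j. mem \<mu>1 j + mem \<mu>2 j + 2 * xt j));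
         V3 = (\<Sum>\<mu>1\<in>{1..M}. \<Sum>\<mu>2\<in>{1..M}. Psi s N (\<lambda>j. mem \<mu>1 j + mem \<mu>2 j + xh j + xt j));
         V4 = (\<Sum>\<mu>1\<in>{1..M}. \<Sum>\<mu>2\<in>{1..M}. exp (dotN N (mem \<mu>1) xh) * exp (dotN N (mem \<mu>2) xh));
         V5 = (\<Sum>\<mu>1\<in>{1..M}. \<Sum>\<mu>2\<in>{1..M}. exp (dotN N (mem \<mu>1) xt) * exp (dotN N (mem \<mu>2) xt));
         V6 = (\<Sum>\<mu>1\<in>{1..M}. \<Sum>\<mu>2\<in>{1..M}. exp (dotN N (mem \<mu>1) xh) * exp (dotN N (mem \<mu>2) xt))
     in (xh i = mem l i \<longrightarrow> expect W \<Delta> > 0)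
      \<and> (xh i = - mem l i \<longrightarrow> expect W \<Delta> < 0)
      \<and> var W \<Delta> = (1 / real r) * (V1 + V2 - 2 * V3 - V4 - V5 + 2 * V6)"
proof -
  define xt where "xt = flip_coord i xh"
  have pmt: "pm1_vec N xt"
    using assms(13) unfolding xt_def pm1_vec_def flip_coord_def by auto
  note H = assms(10,11,3,4,13) pmt
  note DE = Delta_eq[OF H]
  have Deq: "(\<lambda>\<omega>. E_rand s N r \<omega> M mem xt - E_rand s N r \<omega> M mem xh) = (\<lambda>\<omega>. (\<Sum>k<r. \<Sum>\<mu>\<in>{1..M}. T s N r mem xh xt k \<mu> \<omega>))"
    by (rule ext) (rule DE)
  have Ex: "expect (gauss_space N r) (\<lambda>\<omega>. E_rand s N r \<omega> M mem xt - E_rand s N r \<omega> M mem xh)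
     = (\<Sum>\<mu>\<in>{1..M}. exp (dotN N xh (mem \<mu>)) - exp (dotN N xt (mem \<mu>)))"
    unfolding Deq expect_def Delta_exp[OF H] S_def[OF H] ..
  have Va: "var (gauss_space N r) (\<lambda>\<omega>. E_rand s N r \<omega> M mem xt - E_rand s N r \<omega> M mem xh)
     = (SG1 s N M mem xh xt - (S N M mem xh xt)\<^sup>2) / real r"
    unfolding Deq Delta_var[OF assms(10,11,3,4,13) pmt] ..
  have Psi1: "\<And>a b. Psi s N (\<lambda>j. xh j + a j + xh j + b j) = Psi s N (\<lambda>j. a j + b j + 2 * xh j)"
    by (rule arg_cong[where f="Psi s N"], rule ext, simp)
  have Psi2: "\<And>a b. Psi s N (\<lambda>j. xt j + a j + xt j + b j) = Psi s N (\<lambda>j. a j + b j + 2 * xt j)"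
    by (rule arg_cong[where f="Psi s N"], rule ext, simp)
  have Psi3: "\<And>a b. Psi s N (\<lambda>j. xh j + a j + xt j + b j) = Psi s N (\<lambda>j. a j + b j + xh j + xt j)"
    by (rule arg_cong[where f="Psi s N"], rule ext, simp)
  have Psi4: "\<And>a b. Psi s N (\<lambda>j. xt j + a j + xh j + b j) = Psi s N (\<lambda>j. a j + b j + xh j + xt j)"
    by (rule arg_cong[where f="Psi s N"], rule ext, simp)
  have hSG1: "SG1 s N M mem xh xt =
      (\<Sum>\<mu>1\<in>{1..M}. \<Sum>\<mu>2\<in>{1..M}. Psi s N (\<lambda>j. mem \<mu>1 j + mem \<mu>2 j + 2 * xh j))
    + (\<Sum>\<mu>1\<in>{1..M}. \<Sum>\<mu>2\<in>{1..M}. Psi s N (\<lambda>j. mem \<mu>1 j + mem \<mu>2 j + 2 * xt j))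
    - 2 * (\<Sum>\<mu>1\<in>{1..M}. \<Sum>\<mu>2\<in>{1..M}. Psi s N (\<lambda>j. mem \<mu>1 j + mem \<mu>2 j + xh j + xt j))"
  proof -
    have "SG1 s N M mem xh xt = (\<Sum>\<mu>1\<in>{1..M}. \<Sum>\<mu>2\<in>{1..M}.
        Psi s N (\<lambda>j. mem \<mu>1 j + mem \<mu>2 j + 2 * xh j) + Psi s N (\<lambda>j. mem \<mu>1 j + mem \<mu>2 j + 2 * xt j)
        - 2 * Psi s N (\<lambda>j. mem \<mu>1 j + mem \<mu>2 j + xh j + xt j))"
      unfolding SG1_def[OF H] G1_def[OF H] Psi1 Psi2 Psi3 Psi4 by (intro sum.cong refl) simp
    then show ?thesis by (simp add: sum.distrib sum_subtractf sum_distrib_left)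
  qed
  have hS: "(S N M mem xh xt)\<^sup>2 =
      (\<Sum>\<mu>1\<in>{1..M}. \<Sum>\<mu>2\<in>{1..M}. exp (dotN N (mem \<mu>1) xh) * exp (dotN N (mem \<mu>2) xh))
    + (\<Sum>\<mu>1\<in>{1..M}. \<Sum>\<mu>2\<in>{1..M}. exp (dotN N (mem \<mu>1) xt) * exp (dotN N (mem \<mu>2) xt))
    - 2 * (\<Sum>\<mu>1\<in>{1..M}. \<Sum>\<mu>2\<in>{1..M}. exp (dotN N (mem \<mu>1) xh) * exp (dotN N (mem \<mu>2) xt))"
  proof -
    define a where "a \<mu> = exp (dotN N (mem \<mu>) xh)" for \<mu>
    define b where "b \<mu> = exp (dotN N (mem \<mu>) xt)" for \<mu>
    have "S N M mem xh xt = (\<Sum>\<mu>\<in>{1..M}. a \<mu> - b \<mu>)"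
      unfolding S_def[OF H] a_def b_def by (simp add: dot_comm)
    then have "(S N M mem xh xt)\<^sup>2 = (\<Sum>\<mu>1\<in>{1..M}. \<Sum>\<mu>2\<in>{1..M}. (a \<mu>1 - b \<mu>1) * (a \<mu>2 - b \<mu>2))"
      by (simp only: power2_eq_square sum_product)
    also have "\<dots> = (\<Sum>\<mu>1\<in>{1..M}. \<Sum>\<mu>2\<in>{1..M}. a \<mu>1 * a \<mu>2) + (\<Sum>\<mu>1\<in>{1..M}. \<Sum>\<mu>2\<in>{1..M}. b \<mu>1 * b \<mu>2)
       - (\<Sum>\<mu>1\<in>{1..M}. \<Sum>\<mu>2\<in>{1..M}. a \<mu>1 * b \<mu>2) - (\<Sum>\<mu>1\<in>{1..M}. \<Sum>\<mu>2\<in>{1..M}. b \<mu>1 * a \<mu>2)"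
      by (simp add: sum.distrib sum_subtractf algebra_simps)
    also have "(\<Sum>\<mu>1\<in>{1..M}. \<Sum>\<mu>2\<in>{1..M}. b \<mu>1 * a \<mu>2) = (\<Sum>\<mu>1\<in>{1..M}. \<Sum>\<mu>2\<in>{1..M}. a \<mu>1 * b \<mu>2)"
      by (subst sum.swap) (simp add: mult.commute)
    finally show ?thesis unfolding a_def b_def by simp
  qed
  note P1 = part1[OF assms(4,6,9,12,13,14,15)]
  have gen: "\<And>a b c d e f (q::real). (a + b - 2*c - (d + e - 2*f)) / q = 1/q * (a + b - 2*c - d - e + 2*f)"
  proof -
    fix a b c d e f q :: real
    have "a + b - 2*c - (d + e - 2*f) = a + b - 2*c - d - e + 2*f" by simp
    then show "(a + b - 2*c - (d + e - 2*f)) / q = 1/q * (a + b - 2*c - d - e + 2*f)" by simp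
  qed
  show ?thesis
    unfolding Let_def xt_def[symmetric] Ex Va hSG1 hS gen
  proof (intro conjI)
    show "xh i = mem l i \<longrightarrow> 0 < (\<Sum>\<mu>\<in>{1..M}. exp (dotN N xh (mem \<mu>)) - exp (dotN N xt (mem \<mu>)))"
      using P1 unfolding xt_def by blast
    show "xh i = - mem l i \<longrightarrow> (\<Sum>\<mu>\<in>{1..M}. exp (dotN N xh (mem \<mu>)) - exp (dotN N xt (mem \<mu>))) < 0"
      using P1 unfolding xt_def by blast
  qed (rule refl)
qed

end
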